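(* Let $L\ge2$, let $S=(d,N_1,\dots,N_{L-1},1)$ be a neural network architecture, let $B>0$, and let $\varrho:\mathbb{R}\to\mathbb{R}$. Assume at least one of the following: (i) $N_{L-1}\ge2$ and $\varrho\in C^1(\mathbb{R})\setminus C^\infty(\mathbb{R})$; (ii) $N_{L-1}\ge2$ and $\varrho$ is bounded, analytic, and not constant; (iii) $\varrho$ is approximately homogeneous of order $(r,q)$ for some $r,q\in\mathbb{N}_0$ with $r\ne q$, and $\varrho\in C^{\max\{r,q\}}(\mathbb{R})$. Then $\mathcal{RNN}_\varrho^{[-B,B]^d}(S)$ is not closed in $C([-B,B]^d)$ (with the supremum norm).
   Context: A neural network with architecture $S=(N_0,\dots,N_L)$ ($N_0=d$) is a family $\Phi=((A_\ell,b_\ell))_{\ell=1}^L$, $A_\ell\in\mathbb{R}^{N_\ell\times N_{\ell-1}}$, $b_\ell\in\mathbb{R}^{N_\ell}$; $\mathcal{NN}(S)$ is the set of these. For $\varrho:\mathbb{R}\to\mathbb{R}$ and $\Omega\subset\mathbb{R}^d$, $\mathrm{R}_\varrho^\Omega(\Phi):\Omega\to\mathbb{R}^{N_L}$, $x\mapsto x_L$, where $x_0=x$, $x_\ell=\varrho(A_\ell x_{\ell-1}+b_\ell)$ for $1\le\ell\le L-1$ (componentwise), $x_L=A_Lx_{L-1}+b_L$; $\mathcal{RNN}_\varrho^\Omega(S)=\{\mathrm{R}_\varrho^\Omega(\Phi):\Phi\in\mathcal{NN}(S)\}$. A function $f:\mathbb{R}\to\mathbb{R}$ is approximately homogeneous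 of order $(r,q)\in\mathbb{N}_0^2$ if there is $s>0$ with $|f(x)-x^r|\le s$ for all $x\ge0$ and $|f(x)-x^q|\le s$ for all $x\le0$. *)

theory Defs
  imports "HOL-Analysis.Analysis"
begin

type_synonym layer = "(nat \<Rightarrow> nat \<Rightarrow> real) \<times> (nat \<Rightarrow> real)"

text \<open>Evaluation of a network with architecture S = [N_0,...,N_L]; vectors in R^n are
  represented as functions nat => real of which only the first n entries are used;
  matrix A : R^{N_l x N_(l-1)} is represented as A i j with i < N_l, j < N_(l-1).\<close>
fun nn_eval :: "(real \<Rightarrow> real) \<Rightarrow> nat list \<Rightarrow> layer list \<Rightarrow> (nat \<Rightarrow> real) \<Rightarrow> (nat \<Rightarrow> real)" where
  "nn_eval \<rho> (n # m # ns) ((A, b) # \<Phi>) x =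
     (let y = (\<lambda>i. (\<Sum>j<n. A i j * x j) + b i)
      in if ns = [] then y else nn_eval \<rho> (m # ns) \<Phi> (\<lambda>i. \<rho> (y i)))"
| "nn_eval \<rho> _ _ x = x"

definition NN :: "nat list \<Rightarrow> layer list set" where
  "NN S = {\<Phi>. length \<Phi> = length S - 1}"

definition realize :: "(real \<Rightarrow> real) \<Rightarrow> nat list \<Rightarrow> layer list \<Rightarrow> (nat \<Rightarrow> real) \<Rightarrow> real" where
  "realize \<rho> S \<Phi> x = nn_eval \<rho> S \<Phi> x 0"

definition cube :: "nat \<Rightarrow> real \<Rightarrow> (nat \<Rightarrow> real) set" where
  "cube d B = {x. (\<forall>i<d. - B \<le> x i \<and> x i \<le> B) \<and> (\<forall>i\<ge>d. x i = 0)}"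

definition Ck :: "nat \<Rightarrow> (real \<Rightarrow> real) \<Rightarrow> bool" where
  "Ck k f \<longleftrightarrow> (\<forall>i<k. \<forall>x. (deriv ^^ i) f differentiable (at x))
               \<and> continuous_on UNIV ((deriv ^^ k) f)"

definition Cinf :: "(real \<Rightarrow> real) \<Rightarrow> bool" where
  "Cinf f \<longleftrightarrow> (\<forall>k. Ck k f)"

definition real_analytic :: "(real \<Rightarrow> real) \<Rightarrow> bool" where
  "real_analytic f \<longleftrightarrow> (\<forall>x0. \<exists>r>0. \<exists>c :: nat \<Rightarrow> real.
      \<forall>x. \<bar>x - x0\<bar> < r \<longrightarrow> (\<lambda>n. c n * (x - x0) ^ n) sums f x)"

definition approx_homogeneous :: "(real \<Rightarrow> real) \<Rightarrow> nat \<Rightarrow> nat \<Rightarrow> bool" where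
  "approx_homogeneous f r q \<longleftrightarrow> (\<exists>s>0. (\<forall>x\<ge>0. \<bar>f x - x ^ r\<bar> \<le> s) \<and> (\<forall>x\<le>0. \<bar>f x - x ^ q\<bar> \<le> s))"

end

theory Submission
  imports Defs "HOL-Complex_Analysis.Complex_Analysis"
begin


lemma Ck_0: "Ck 0 f \<longleftrightarrow> continuous_on UNIV f"
  by (simp add: Ck_def)

lemma Ck_Suc: "Ck (Suc k) f \<longleftrightarrow> (\<forall>x. f differentiable (at x)) \<and> Ck k (deriv f)"
proof -
  have e: "\<And>i. (deriv ^^ Suc i) f = (deriv ^^ i) (deriv f)"
    by (simp add: funpow_Suc_right del: funpow.simps)
  have "(\<forall>i<Suc k. \<forall>x. (deriv ^^ i) f differentiable (at x)) \<longleftrightarrow>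
        (\<forall>x. f differentiable (at x)) \<and> (\<forall>i<k. \<forall>x. (deriv ^^ i) (deriv f) differentiable (at x))"
  proof
    assume H: "\<forall>i<Suc k. \<forall>x. (deriv ^^ i) f differentiable (at x)"
    show "(\<forall>x. f differentiable (at x)) \<and> (\<forall>i<k. \<forall>x. (deriv ^^ i) (deriv f) differentiable (at x))"
    proof (intro conjI allI impI)
      fix x show "f differentiable (at x)" using H[rule_format, of 0] by simp
    next
      fix i x assume "i < k"
      then show "(deriv ^^ i) (deriv f) differentiable (at x)"
        using H[rule_format, of "Suc i"] e[of i] by simp
    qed
  next
    assume H: "(\<forall>x. f differentiable (at x)) \<and> (\<forall>i<k. \<forall>x. (deriv ^^ i) (deriv f) differentiable (at x))"
    show "\<forall>i<Suc k. \<forall>x. (deriv ^^ i) f differentiable (at x)"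
    proof (intro allI impI)
      fix i x assume "i < Suc k"
      then consider "i = 0" | j where "i = Suc j" "j < k" using less_Suc_eq_0_disj by auto
      then show "(deriv ^^ i) f differentiable (at x)"
      proof cases
        case 1 then show ?thesis using H by simp
      next
        case 2 then show ?thesis using H e[of j] by metis
      qed
    qed
  qed
  then show ?thesis
    unfolding Ck_def e by simp
qed

lemma Ck_down: "Ck (Suc k) f \<Longrightarrow> Ck k f"
proof (induction k arbitrary: f)
  case 0
  then show ?case
    by (auto simp: Ck_Suc Ck_0 intro!: continuous_at_imp_continuous_on differentiable_imp_continuous_within)
next
  case (Suc k)
  then show ?case by (simp add: Ck_Suc)
qed

lemma Ck_le: "j \<le> k \<Longrightarrow> Ck k f \<Longrightarrow> Ck j f"
proof (induction k)
  case 0 then show ?case by simp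
next
  case (Suc k) then show ?case using Ck_down le_Suc_eq by blast
qed
lemma diff_DERIV: "f differentiable (at x) \<Longrightarrow> (f has_real_derivative deriv f x) (at x)"
  using DERIV_deriv_iff_real_differentiable by blast

lemma Ck_const: "Ck k (\<lambda>x. c)"
proof (induction k arbitrary: c)
  case 0 then show ?case by (simp add: Ck_0)
next
  case (Suc k)
  have "deriv (\<lambda>x. c) = (\<lambda>x. 0)" by (rule ext) simp
  then show ?case using Suc by (simp add: Ck_Suc)
qed

lemma Ck_id: "Ck k (\<lambda>x. x)"
proof (cases k)
  case 0 then show ?thesis by (simp add: Ck_0)
next
  case (Suc k)
  have "deriv (\<lambda>x. x) = (\<lambda>x. 1)" by (rule ext) simp
  then show ?thesis using Suc by (simp add: Ck_Suc Ck_const)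
qed

lemma Ck_add: "Ck k f \<Longrightarrow> Ck k g \<Longrightarrow> Ck k (\<lambda>x. f x + g x)"
proof (induction k arbitrary: f g)
  case 0 then show ?case by (simp add: Ck_0 continuous_on_add)
next
  case (Suc k)
  then have df: "\<forall>x. f differentiable (at x)" and dg: "\<forall>x. g differentiable (at x)"
    by (auto simp: Ck_Suc)
  have e: "deriv (\<lambda>x. f x + g x) = (\<lambda>x. deriv f x + deriv g x)"
    by (rule ext, rule DERIV_imp_deriv, rule DERIV_add) (use df dg diff_DERIV in auto)
  show ?case using Suc df dg by (simp add: Ck_Suc e)
qed

lemma Ck_mult: "Ck k f \<Longrightarrow> Ck k g \<Longrightarrow> Ck k (\<lambda>x. f x * g x)"
proof (induction k arbitrary: f g)
  case 0 then show ?case by (simp add: Ck_0 continuous_on_mult)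
next
  case (Suc k)
  then have df: "\<forall>x. f differentiable (at x)" and dg: "\<forall>x. g differentiable (at x)"
    by (auto simp: Ck_Suc)
  have e: "deriv (\<lambda>x. f x * g x) = (\<lambda>x. f x * deriv g x + deriv f x * g x)"
    by (rule ext, rule DERIV_imp_deriv, rule DERIV_mult'[OF diff_DERIV diff_DERIV]) (use df dg in auto)
  have cf: "Ck k f" "Ck k (deriv f)" using Suc.prems(1) Ck_down[of k f] by (simp_all add: Ck_Suc)
  have cg: "Ck k g" "Ck k (deriv g)" using Suc.prems(2) Ck_down[of k g] by (simp_all add: Ck_Suc)
  have "Ck k (\<lambda>x. deriv f x * g x)" using cf cg by (intro Suc.IH) 
  moreover have "Ck k (\<lambda>x. f x * deriv g x)" using cf cg by (intro Suc.IH)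
  ultimately show ?case using df dg by (simp add: Ck_Suc e Ck_add)
qed

lemma Ck_compose: "Ck k f \<Longrightarrow> Ck k u \<Longrightarrow> Ck k (\<lambda>x. f (u x))"
proof (induction k arbitrary: f u)
  case 0 then show ?case
    unfolding Ck_0 by (rule continuous_on_compose2[of UNIV f UNIV u]) simp_all
next
  case (Suc k)
  then have df: "\<And>x. f differentiable (at x)" and du: "\<And>x. u differentiable (at x)"
    by (simp_all add: Ck_Suc)
  have D: "((\<lambda>x. f (u x)) has_real_derivative deriv f (u x) * deriv u x) (at x)" for x
    by (rule DERIV_chain2[OF diff_DERIV[OF df] diff_DERIV[OF du]])
  have e: "deriv (\<lambda>x. f (u x)) = (\<lambda>x. deriv f (u x) * deriv u x)"
    by (rule ext, rule DERIV_imp_deriv, rule D)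
  have "Ck k (\<lambda>x. deriv f (u x))"
  proof (rule Suc.IH[of "deriv f" u])
    show "Ck k (deriv f)" using Suc.prems(1) by (simp add: Ck_Suc)
    show "Ck k u" using Suc.prems(2) by (rule Ck_down)
  qed
  moreover have "Ck k (deriv u)" using Suc.prems by (simp add: Ck_Suc)
  ultimately have "Ck k (\<lambda>x. deriv f (u x) * deriv u x)" by (rule Ck_mult)
  moreover have "(\<lambda>x. f (u x)) differentiable (at x)" for x
    using D real_differentiable_def by blast
  ultimately show ?case by (simp add: Ck_Suc e)
qed

lemma Ck_sum: "(\<And>j. Ck k (f j)) \<Longrightarrow> Ck k (\<lambda>x. \<Sum>j<(n::nat). f j x)"
  by (induction n) (simp_all add: Ck_const Ck_add)

lemma closed_sum:
  assumes Pconst: "\<And>c. P (\<lambda>t. c)" and Padd: "\<And>f g. P f \<Longrightarrow> P g \<Longrightarrow> P (\<lambda>t. f t + g t)"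
  shows "(\<And>j. P (f j)) \<Longrightarrow> P (\<lambda>t. \<Sum>j<(n::nat). f j t)"
  by (induction n) (simp_all add: Pconst Padd)

lemma nn_eval_closed:
  assumes Pconst: "\<And>c. P (\<lambda>t. c)" and Padd: "\<And>f g. P f \<Longrightarrow> P g \<Longrightarrow> P (\<lambda>t. f t + g t)"
    and Pcmul: "\<And>f c. P f \<Longrightarrow> P (\<lambda>t. c * f t)" and Prho: "\<And>f. P f \<Longrightarrow> P (\<lambda>t. \<rho> (f t))"
  shows "(\<And>j. P (\<lambda>t. x t j)) \<Longrightarrow> P (\<lambda>t. nn_eval \<rho> S \<Phi> (x t) i)"
proof (induction \<Phi> arbitrary: S x i)
  case Nil
  have "nn_eval \<rho> S [] y = y" for y by (cases "(\<rho>,S,[]::layer list,y)" rule: nn_eval.cases) auto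
  then show ?case using Nil by simp
next
  case (Cons L \<Phi>)
  obtain A b where L: "L = (A, b)" by fastforce
  show ?case
  proof (cases S)
    case Nil then show ?thesis using Cons.prems by simp
  next
    case (Cons n S')
    show ?thesis
    proof (cases S')
      case Nil then show ?thesis using Cons.prems \<open>S = n # S'\<close> by simp
    next
      case (Cons m ns)
      have Py: "P (\<lambda>t. (\<Sum>j<n. A i j * x t j) + b i)" for i
        by (intro Padd Pconst closed_sum[where P=P] Pcmul) (simp_all add: Pconst Padd Cons.prems)
      show ?thesis
      proof (cases "ns = []")
        case True then show ?thesis using Py \<open>S = n # S'\<close> Cons L by simp
      next
        case False
        have "P (\<lambda>t. nn_eval \<rho> (m # ns) \<Phi> (\<lambda>i. \<rho> ((\<Sum>j<n. A i j * x t j) + b i)) i)"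
          by (rule Cons.IH) (rule Prho[OF Py])
        then show ?thesis using False \<open>S = n # S'\<close> Cons L by simp
      qed
    qed
  qed
qed

lemma Ck_line: "Ck m \<rho> \<Longrightarrow> Ck m (\<lambda>t. nn_eval \<rho> S \<Phi> (\<lambda>j. if j = 0 then t else 0) i)"
proof (rule nn_eval_closed[where P="Ck m"])
  show "Ck m (\<lambda>t. c)" for c by (rule Ck_const)
  show "Ck m f \<Longrightarrow> Ck m g \<Longrightarrow> Ck m (\<lambda>t. f t + g t)" for f g by (rule Ck_add)
  show "Ck m f \<Longrightarrow> Ck m (\<lambda>t. c * f t)" for f c by (rule Ck_mult[OF Ck_const])
  show "Ck m \<rho> \<Longrightarrow> Ck m f \<Longrightarrow> Ck m (\<lambda>t. \<rho> (f t))" for f by (rule Ck_compose)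
  show "Ck m (\<lambda>t. if j = 0 then t else 0)" for j by (cases "j = 0") (simp_all add: Ck_id Ck_const)
qed

lemma eventually_open: "open U \<Longrightarrow> z \<in> U \<Longrightarrow> \<forall>x\<in>U. f x = g x \<Longrightarrow> eventually (\<lambda>x. f x = g x) (nhds z)"
  using eventually_nhds by blast

lemma deriv_local:
  assumes "open U" "\<forall>x\<in>U. f x = g x"
  shows "\<forall>x\<in>U. (deriv ^^ j) f x = (deriv ^^ j) g x"
proof (induction j)
  case 0 then show ?case using assms by simp
next
  case (Suc j)
  show ?case
  proof
    fix x assume "x \<in> U"
    then have "deriv ((deriv ^^ j) f) x = deriv ((deriv ^^ j) g) x"
      by (intro deriv_cong_ev eventually_open[OF assms(1)] Suc refl)
    then show "(deriv ^^ Suc j) f x = (deriv ^^ Suc j) g x" by simp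
  qed
qed

lemma differentiable_local:
  assumes "open U" "z \<in> U" "\<forall>x\<in>U. f x = g x" "g differentiable (at z)"
  shows "f differentiable (at z)"
proof -
  obtain D where "(g has_derivative D) (at z)" using assms(4) differentiable_def by blast
  then have "(f has_derivative D) (at z)"
    by (rule has_derivative_transform_within_open[OF _ assms(1,2)]) (use assms(3) in auto)
  then show ?thesis using differentiable_def by blast
qed

definition LocCk :: "nat \<Rightarrow> (real \<Rightarrow> real) \<Rightarrow> real \<Rightarrow> bool" where
  "LocCk n f z \<longleftrightarrow> (\<forall>i<n. (deriv ^^ i) f differentiable (at z)) \<and> isCont ((deriv ^^ n) f) z"

lemma Ck_LocCk: "Ck n f \<longleftrightarrow> (\<forall>z. LocCk n f z)"
  unfolding Ck_def LocCk_def continuous_on_eq_continuous_at[OF open_UNIV] by blast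

lemma LocCk_local:
  assumes "open U" "z \<in> U" "\<forall>x\<in>U. f x = g x" "LocCk n g z"
  shows "LocCk n f z"
proof -
  have e: "\<forall>x\<in>U. (deriv ^^ j) f x = (deriv ^^ j) g x" for j
    by (rule deriv_local[OF assms(1,3)])
  show ?thesis
    unfolding LocCk_def
  proof (intro conjI allI impI)
    fix i assume "i < n"
    then show "(deriv ^^ i) f differentiable (at z)"
      using differentiable_local[OF assms(1,2) e[of i]] assms(4) LocCk_def by blast
  next
    show "isCont ((deriv ^^ n) f) z"
      using isCont_cong[OF eventually_open[OF assms(1,2) e[of n]]] assms(4) LocCk_def by blast
  qed
qed

lemma zero_derivs: "(deriv ^^ j) (\<lambda>t. 0::real) = (\<lambda>t. 0)"
  by (induction j) auto

lemma pow_derivs: "j \<le> m \<Longrightarrow> (deriv ^^ j) (\<lambda>t::real. t ^ m) = (\<lambda>t. (\<Prod>i<j. real (m - i)) * t ^ (m - j))"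
proof (induction j)
  case 0 then show ?case by simp
next
  case (Suc j)
  then have IH: "(deriv ^^ j) (\<lambda>t::real. t ^ m) = (\<lambda>t. (\<Prod>i<j. real (m - i)) * t ^ (m - j))" by simp
  have "deriv (\<lambda>t. (\<Prod>i<j. real (m - i)) * t ^ (m - j)) t = (\<Prod>i<Suc j. real (m - i)) * t ^ (m - Suc j)" for t
  proof (rule DERIV_imp_deriv)
    have "((\<lambda>t. (\<Prod>i<j. real (m - i)) * t ^ (m - j)) has_real_derivative
       (\<Prod>i<j. real (m - i)) * (real (m - j) * t ^ (m - j - 1))) (at t)"
      by (intro DERIV_cmult) (use DERIV_pow[of "m - j" t] in simp)
    moreover have "(\<Prod>i<j. real (m - i)) * (real (m - j) * t ^ (m - j - 1)) = (\<Prod>i<Suc j. real (m - i)) * t ^ (m - Suc j)"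
      unfolding prod.lessThan_Suc by (simp add: mult_ac)
    ultimately show "((\<lambda>t. (\<Prod>i<j. real (m - i)) * t ^ (m - j)) has_real_derivative (\<Prod>i<Suc j. real (m - i)) * t ^ (m - Suc j)) (at t)"
      by metis
  qed
  then show ?case using IH by (simp del: prod.lessThan_Suc)
qed

lemma jump:
  assumes "Ck m f" "open U" "open V" "\<forall>t\<in>U. f t = t ^ m" "\<forall>t\<in>V. f t = 0"
    "X \<longlonglongrightarrow> 0" "\<forall>n. X n \<in> U" "Y \<longlonglongrightarrow> 0" "\<forall>n. Y n \<in> V"
  shows False
proof -
  define D where "D = (deriv ^^ m) f"
  have c: "isCont D 0" using assms(1) unfolding Ck_LocCk LocCk_def D_def by blast
  define c where "c = (\<Prod>i<m. real (m - i))"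
  have "c \<noteq> 0" unfolding c_def by (subst prod_zero_iff) auto
  have DU: "D t = c" if "t \<in> U" for t
  proof -
    have "D t = (deriv ^^ m) (\<lambda>t. t ^ m) t" using deriv_local[OF assms(2,4), of m] that unfolding D_def by blast
    also have "\<dots> = c" unfolding pow_derivs[OF order_refl] c_def by simp
    finally show ?thesis .
  qed
  have DV: "D t = 0" if "t \<in> V" for t
  proof -
    have "D t = (deriv ^^ m) (\<lambda>t. 0) t" using deriv_local[OF assms(3,5), of m] that unfolding D_def by blast
    also have "\<dots> = 0" unfolding zero_derivs by simp
    finally show ?thesis .
  qed
  have "(\<lambda>n. D (X n)) \<longlonglongrightarrow> D 0" by (rule isCont_tendsto_compose[OF c assms(6)])
  moreover have "(\<lambda>n. D (X n)) = (\<lambda>n. c)" using DU assms(7) by auto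
  ultimately have "D 0 = c" using LIMSEQ_unique tendsto_const by metis
  have "(\<lambda>n. D (Y n)) \<longlonglongrightarrow> D 0" by (rule isCont_tendsto_compose[OF c assms(8)])
  moreover have "(\<lambda>n. D (Y n)) = (\<lambda>n. 0)" using DV assms(9) by auto
  ultimately have "D 0 = 0" using LIMSEQ_unique tendsto_const by metis
  then show False using \<open>D 0 = c\<close> \<open>c \<noteq> 0\<close> by simp
qed



definition Hol :: "(real \<Rightarrow> real) \<Rightarrow> bool" where
  "Hol f \<longleftrightarrow> (\<forall>x0. \<exists>r>0. \<exists>F. F holomorphic_on ball (complex_of_real x0) r \<and>
      (\<forall>x. \<bar>x - x0\<bar> < r \<longrightarrow> F (complex_of_real x) = complex_of_real (f x)))"

lemma Hol_const: "Hol (\<lambda>t. c)"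
  unfolding Hol_def
  by (intro allI exI[of _ 1] conjI exI[of _ "\<lambda>z. complex_of_real c"]) auto

lemma Hol_id: "Hol (\<lambda>t. t)"
  unfolding Hol_def
  by (intro allI exI[of _ 1] conjI exI[of _ "\<lambda>z. z"]) auto

lemma Hol_add: assumes "Hol f" "Hol g" shows "Hol (\<lambda>t. f t + g t)"
  unfolding Hol_def
proof
  fix x0
  obtain r1 F where r1: "r1 > 0" "F holomorphic_on ball (complex_of_real x0) r1"
      "\<forall>x. \<bar>x - x0\<bar> < r1 \<longrightarrow> F (complex_of_real x) = complex_of_real (f x)"
    using assms(1) unfolding Hol_def by blast
  obtain r2 G where r2: "r2 > 0" "G holomorphic_on ball (complex_of_real x0) r2"
      "\<forall>x. \<bar>x - x0\<bar> < r2 \<longrightarrow> G (complex_of_real x) = complex_of_real (g x)"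
    using assms(2) unfolding Hol_def by blast
  show "\<exists>r>0. \<exists>H. H holomorphic_on ball (complex_of_real x0) r \<and>
      (\<forall>x. \<bar>x - x0\<bar> < r \<longrightarrow> H (complex_of_real x) = complex_of_real (f x + g x))"
  proof (intro exI[of _ "min r1 r2"] conjI exI[of _ "\<lambda>z. F z + G z"])
    show "(\<lambda>z. F z + G z) holomorphic_on ball (complex_of_real x0) (min r1 r2)"
      by (intro holomorphic_intros holomorphic_on_subset[OF r1(2)] holomorphic_on_subset[OF r2(2)]) auto
  qed (use r1 r2 in auto)
qed

lemma Hol_cmul: assumes "Hol f" shows "Hol (\<lambda>t. c * f t)"
  unfolding Hol_def
proof
  fix x0
  obtain r1 F where r1: "r1 > 0" "F holomorphic_on ball (complex_of_real x0) r1"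
      "\<forall>x. \<bar>x - x0\<bar> < r1 \<longrightarrow> F (complex_of_real x) = complex_of_real (f x)"
    using assms(1) unfolding Hol_def by blast
  show "\<exists>r>0. \<exists>H. H holomorphic_on ball (complex_of_real x0) r \<and>
      (\<forall>x. \<bar>x - x0\<bar> < r \<longrightarrow> H (complex_of_real x) = complex_of_real (c * f x))"
  proof (intro exI[of _ r1] conjI exI[of _ "\<lambda>z. complex_of_real c * F z"])
    show "(\<lambda>z. complex_of_real c * F z) holomorphic_on ball (complex_of_real x0) r1"
      by (intro holomorphic_intros r1(2))
  qed (use r1 in auto)
qed

lemma Hol_compose: assumes "Hol f" "Hol u" shows "Hol (\<lambda>t. f (u t))"
  unfolding Hol_def
proof
  fix x0
  obtain r1 F where r1: "r1 > 0" "F holomorphic_on ball (complex_of_real (u x0)) r1"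
      "\<forall>x. \<bar>x - u x0\<bar> < r1 \<longrightarrow> F (complex_of_real x) = complex_of_real (f x)"
    using assms(1) unfolding Hol_def by blast
  obtain r2 U where r2: "r2 > 0" "U holomorphic_on ball (complex_of_real x0) r2"
      "\<forall>x. \<bar>x - x0\<bar> < r2 \<longrightarrow> U (complex_of_real x) = complex_of_real (u x)"
    using assms(2) unfolding Hol_def by blast
  have "continuous_on (ball (complex_of_real x0) r2) U"
    using r2(2) holomorphic_on_imp_continuous_on by blast
  then obtain d where d: "d > 0" "\<forall>z\<in>ball (complex_of_real x0) r2. dist z (complex_of_real x0) < d \<longrightarrow>
      dist (U z) (U (complex_of_real x0)) < r1"
    unfolding continuous_on_iff using r1(1) r2(1) by (metis centre_in_ball)
  have U0: "U (complex_of_real x0) = complex_of_real (u x0)" using r2(3) r2(1) by auto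
  define r where "r = min r2 d"
  have sub: "U ` ball (complex_of_real x0) r \<subseteq> ball (complex_of_real (u x0)) r1"
  proof
    fix w assume "w \<in> U ` ball (complex_of_real x0) r"
    then obtain z where z: "z \<in> ball (complex_of_real x0) r" "w = U z" by blast
    then have "dist (U z) (U (complex_of_real x0)) < r1" using d unfolding r_def by (auto simp: dist_commute)
    then show "w \<in> ball (complex_of_real (u x0)) r1" using z U0 by (simp add: dist_commute)
  qed
  show "\<exists>r>0. \<exists>H. H holomorphic_on ball (complex_of_real x0) r \<and>
      (\<forall>x. \<bar>x - x0\<bar> < r \<longrightarrow> H (complex_of_real x) = complex_of_real (f (u x)))"
  proof (intro exI[of _ r] conjI exI[of _ "\<lambda>z. F (U z)"] allI impI)
    show "r > 0" using r1 r2 d unfolding r_def by simp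
    have "(F \<circ> U) holomorphic_on ball (complex_of_real x0) r"
      by (rule holomorphic_on_compose_gen[OF holomorphic_on_subset[OF r2(2)] r1(2) sub]) (auto simp: r_def)
    then show "(\<lambda>z. F (U z)) holomorphic_on ball (complex_of_real x0) r" by (simp add: o_def)
  next
    fix x assume x: "\<bar>x - x0\<bar> < r"
    then have "U (complex_of_real x) = complex_of_real (u x)" using r2(3) unfolding r_def by simp
    moreover have "U (complex_of_real x) \<in> ball (complex_of_real (u x0)) r1"
    proof -
      have "complex_of_real x \<in> ball (complex_of_real x0) r" using x by (simp add: dist_real_def abs_minus_commute)
      then show ?thesis using sub by blast
    qed
    ultimately have "\<bar>u x - u x0\<bar> < r1" by (simp add: dist_real_def abs_minus_commute)
    then show "F (U (complex_of_real x)) = complex_of_real (f (u x))"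
      using r1(3) \<open>U (complex_of_real x) = complex_of_real (u x)\<close> by simp
  qed
qed

lemma Hol_line: "Hol \<rho> \<Longrightarrow> Hol (\<lambda>t. nn_eval \<rho> S \<Phi> (\<lambda>j. if j = 0 then t else 0) i)"
proof (rule nn_eval_closed[where P="Hol"])
  show "Hol (\<lambda>t. c)" for c by (rule Hol_const)
  show "Hol f \<Longrightarrow> Hol g \<Longrightarrow> Hol (\<lambda>t. f t + g t)" for f g by (rule Hol_add)
  show "Hol f \<Longrightarrow> Hol (\<lambda>t. c * f t)" for f c by (rule Hol_cmul)
  show "Hol \<rho> \<Longrightarrow> Hol f \<Longrightarrow> Hol (\<lambda>t. \<rho> (f t))" for f by (rule Hol_compose)
  show "Hol (\<lambda>t. if j = 0 then t else 0)" for j by (cases "j = 0") (simp_all add: Hol_id Hol_const)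
qed

lemma Hol_zero:
  assumes "Hol f" "a < b" "\<forall>t. a < t \<and> t < b \<longrightarrow> f t = 0"
  shows "f t = 0"
proof -
  define Z where "Z = {t. \<exists>e>0. \<forall>s. \<bar>s - t\<bar> < e \<longrightarrow> f s = 0}"
  have "open Z"
    unfolding open_dist
  proof (intro ballI)
    fix t assume "t \<in> Z"
    then obtain e where e: "e > 0" "\<forall>s. \<bar>s - t\<bar> < e \<longrightarrow> f s = 0" unfolding Z_def by blast
    show "\<exists>e>0. \<forall>y. dist y t < e \<longrightarrow> y \<in> Z"
    proof (intro exI[of _ e] conjI allI impI)
      fix y assume "dist y t < e"
      then show "y \<in> Z" unfolding Z_def using e
        by (intro CollectI exI[of _ "e - dist y t"]) (auto simp: dist_real_def)
    qed (use e in auto)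
  qed
  have "open (- Z)"
    unfolding open_dist
  proof (intro ballI)
    fix t assume "t \<in> - Z"
    obtain r F where r: "r > 0" "F holomorphic_on ball (complex_of_real t) r"
      "\<forall>x. \<bar>x - t\<bar> < r \<longrightarrow> F (complex_of_real x) = complex_of_real (f x)"
      using assms(1) unfolding Hol_def by blast
    have "s \<notin> Z" if s: "\<bar>s - t\<bar> < r" for s
    proof
      assume "s \<in> Z"
      then obtain e where e: "e > 0" "\<forall>w. \<bar>w - s\<bar> < e \<longrightarrow> f w = 0" unfolding Z_def by blast
      define e' where "e' = min e (r - \<bar>s - t\<bar>)"
      have e': "e' > 0" using e s unfolding e'_def by simp
      define U where "U = complex_of_real ` {w. \<bar>w - s\<bar> < e'}"
      have FU: "F z = 0" if "z \<in> U" for z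
      proof -
        obtain w where w: "\<bar>w - s\<bar> < e'" "z = complex_of_real w" using \<open>z \<in> U\<close> unfolding U_def by blast
        have "\<bar>w - t\<bar> < r" using w(1) unfolding e'_def by linarith
        then show ?thesis using r(3) e(2) w unfolding e'_def by simp
      qed
      have US: "U \<subseteq> ball (complex_of_real t) r"
      proof
        fix z assume "z \<in> U"
        then obtain w where w: "\<bar>w - s\<bar> < e'" "z = complex_of_real w" unfolding U_def by blast
        have "\<bar>w - t\<bar> < r" using w(1) unfolding e'_def by linarith
        then show "z \<in> ball (complex_of_real t) r" using w by (simp add: dist_real_def abs_minus_commute)
      qed
      have lim: "complex_of_real s islimpt U"
        unfolding islimpt_approachable
      proof (intro allI impI)
        fix \<epsilon> :: real assume "\<epsilon> > 0"
        define w where "w = s + min \<epsilon> e' / 2"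
        have "\<bar>w - s\<bar> < e'" unfolding w_def using e' \<open>\<epsilon> > 0\<close> by auto
        then have "complex_of_real w \<in> U" unfolding U_def by blast
        moreover have "complex_of_real w \<noteq> complex_of_real s" unfolding w_def using e' \<open>\<epsilon> > 0\<close> by simp
        moreover have "dist w s < \<epsilon>" unfolding w_def using e' \<open>\<epsilon> > 0\<close> by (simp add: dist_real_def)
        then have "dist (complex_of_real w) (complex_of_real s) < \<epsilon>" by (simp only: dist_of_real)
        ultimately show "\<exists>x'\<in>U. x' \<noteq> complex_of_real s \<and> dist x' (complex_of_real s) < \<epsilon>" by blast
      qed
      have "f w = 0" if "\<bar>w - t\<bar> < r" for w
      proof -
        have "F (complex_of_real w) = 0"
          by (rule analytic_continuation[OF r(2) open_ball connected_ball US _ lim FU])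
             (use s that in \<open>auto simp: dist_real_def abs_minus_commute\<close>)
        then show ?thesis using r(3) that by simp
      qed
      then have "t \<in> Z" unfolding Z_def using r(1) by blast
      then show False using \<open>t \<in> - Z\<close> by blast
    qed
    then show "\<exists>e>0. \<forall>y. dist y t < e \<longrightarrow> y \<in> - Z"
      using r(1) by (auto simp: dist_real_def)
  qed
  have "(a + b) / 2 \<in> Z"
    unfolding Z_def
  proof (intro CollectI exI[of _ "(b - a) / 2"] conjI allI impI)
    fix s assume "\<bar>s - (a + b) / 2\<bar> < (b - a) / 2"
    then have h1: "s - (a + b) / 2 < (b - a) / 2" and h2: "- (s - (a + b) / 2) < (b - a) / 2" by (simp_all only: abs_less_iff)
    have "a < s" using h2 by (simp add: field_simps)
    moreover have "s < b" using h1 by (simp add: field_simps)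
    ultimately have "a < s \<and> s < b" by blast
    then show "f s = 0" using assms(3) by blast
  qed (use assms(2) in simp)
  have "Z \<inter> UNIV = {} \<or> (- Z) \<inter> UNIV = {}"
    by (rule connectedD[OF connected_UNIV \<open>open Z\<close> \<open>open (- Z)\<close>]) auto
  then have "t \<in> Z" using \<open>(a + b) / 2 \<in> Z\<close> by auto
  then show ?thesis unfolding Z_def by force
qed

lemma analytic_Hol:
  assumes "real_analytic f" shows "Hol f"
  unfolding Hol_def
proof
  fix x0
  obtain r c where rc: "r > 0" "\<forall>x. \<bar>x - x0\<bar> < r \<longrightarrow> (\<lambda>n. c n * (x - x0) ^ n) sums f x"
    using assms unfolding real_analytic_def by blast
  define P where "P = (\<lambda>w::complex. \<Sum>n. complex_of_real (c n) * w ^ n)"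
  have sm: "summable (\<lambda>n. complex_of_real (c n) * complex_of_real K ^ n)" if "\<bar>K\<bar> < r" for K
  proof -
    have "(\<lambda>n. c n * ((x0 + K) - x0) ^ n) sums f (x0 + K)" using rc(2) that by (metis add_diff_cancel_left')
    then have "summable (\<lambda>n. c n * K ^ n)" by (simp add: sums_summable)
    then have "summable (\<lambda>n. complex_of_real (c n * K ^ n))" by (simp only: summable_complex_of_real)
    then show ?thesis by simp
  qed
  have dP: "P field_differentiable (at w)" if "norm w < r" for w
  proof -
    define K where "K = norm w / 2 + r / 2"
    have "0 \<le> norm w" by simp
    have K0: "K \<ge> 0" using that norm_ge_zero[of w] unfolding K_def by linarith
    have K1: "K < r" "norm w < K" using that unfolding K_def by linarith+
    from K0 K1 have "\<bar>K\<bar> < r" "norm w < norm (complex_of_real K)" by (simp_all add: norm_of_real)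
    then show ?thesis unfolding P_def
      using termdiffs_strong[OF sm] field_differentiable_def by blast
  qed
  show "\<exists>r>0. \<exists>F. F holomorphic_on ball (complex_of_real x0) r \<and>
      (\<forall>x. \<bar>x - x0\<bar> < r \<longrightarrow> F (complex_of_real x) = complex_of_real (f x))"
  proof (intro exI[of _ r] conjI exI[of _ "\<lambda>z. P (z - complex_of_real x0)"] allI impI)
    show "(\<lambda>z. P (z - complex_of_real x0)) holomorphic_on ball (complex_of_real x0) r"
      unfolding holomorphic_on_def
    proof
      fix z assume "z \<in> ball (complex_of_real x0) r"
      then have "norm (z - complex_of_real x0) < r" by (simp add: dist_norm norm_minus_commute)
      then have "P field_differentiable (at (z - complex_of_real x0))" by (rule dP)
      moreover have "(\<lambda>z. z - complex_of_real x0) field_differentiable (at z)"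
        by (intro field_differentiable_diff field_differentiable_ident field_differentiable_const)
      ultimately have "(\<lambda>z. P (z - complex_of_real x0)) field_differentiable (at z)"
        using field_differentiable_compose[of "\<lambda>z. z - complex_of_real x0" z P] by (simp add: o_def)
      then show "(\<lambda>z. P (z - complex_of_real x0)) field_differentiable (at z within ball (complex_of_real x0) r)"
        using field_differentiable_at_within by blast
    qed
  next
    fix x assume "\<bar>x - x0\<bar> < r"
    then have "(\<lambda>n. c n * (x - x0) ^ n) sums f x" using rc(2) by blast
    then have "(\<lambda>n. complex_of_real (c n * (x - x0) ^ n)) sums complex_of_real (f x)"
      by (simp only: sums_of_real_iff)
    then have "(\<lambda>n. complex_of_real (c n) * (complex_of_real x - complex_of_real x0) ^ n) sums complex_of_real (f x)"
      by simp
    then show "P (complex_of_real x - complex_of_real x0) = complex_of_real (f x)"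
      unfolding P_def using sums_unique by metis
  qed (use rc in auto)
qed

lemma Hol_deriv:
  assumes "Hol f" shows "\<exists>D. (f has_real_derivative D) (at x)"
proof -
  obtain r F where r: "r > 0" "F holomorphic_on ball (complex_of_real x) r"
      "\<forall>y. \<bar>y - x\<bar> < r \<longrightarrow> F (complex_of_real y) = complex_of_real (f y)"
    using assms unfolding Hol_def by blast
  have "(F has_field_derivative deriv F (complex_of_real x)) (at (complex_of_real x))"
    by (rule holomorphic_derivI[OF r(2) open_ball]) (use r in simp)
  then have "((\<lambda>t. F (complex_of_real t)) has_vector_derivative deriv F (complex_of_real x)) (at x)"
    by (rule has_vector_derivative_real_field)
  then have "((\<lambda>t. Re (F (complex_of_real t))) has_real_derivative Re (deriv F (complex_of_real x))) (at x)"
    by (rule has_field_derivative_Re)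
  then have "(f has_real_derivative Re (deriv F (complex_of_real x))) (at x)"
    by (rule has_field_derivative_transform_within_open[where S="ball x r"]) (use r in \<open>auto simp: dist_real_def abs_minus_commute\<close>)
  then show ?thesis by blast
qed



definition Good :: "(real \<Rightarrow> real) \<Rightarrow> nat \<Rightarrow> (real \<Rightarrow> real) \<Rightarrow> bool" where
  "Good \<rho> h G \<longleftrightarrow> (\<forall>K>0. \<forall>e>0. \<exists>A b C c. \<forall>s. \<bar>s\<bar> \<le> K \<longrightarrow>
      \<bar>realize \<rho> [1, h, 1] [(A, b), (C, c)] (\<lambda>j. s) - G s\<bar> \<le> e)"

lemma realize2: "realize \<rho> [n, h, 1] [(A, b), (C, c)] x =
   (\<Sum>j<h. C 0 j * \<rho> ((\<Sum>i<n. A j i * x i) + b j)) + c 0"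
  by (simp add: realize_def)

lemma sum_first: "(0::nat) < h \<Longrightarrow> (\<Sum>j<h. (if j = 0 then (a::real) else 0) * f j) = a * f 0"
proof -
  have "(\<Sum>j<h. (if j = 0 then a else 0) * f j) = (\<Sum>j<h. if j = 0 then a * f 0 else 0)"
    by (rule sum.cong) auto
  also assume "0 < h"
  then have "(\<Sum>j<h. if j = 0 then a * f 0 else 0) = a * f 0" by simp
  finally show ?thesis .
qed

lemma Good_affine:
  assumes "Good \<rho> h G" shows "Good \<rho> h (\<lambda>s. G (\<alpha> * s + \<beta>))"
  unfolding Good_def
proof (intro allI impI)
  fix K e :: real assume K: "K > 0" and e: "e > 0"
  define K' where "K' = \<bar>\<alpha>\<bar> * K + \<bar>\<beta>\<bar> + 1"
  have "K' > 0" unfolding K'_def using K by (simp add: add_nonneg_pos)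
  then obtain A b C c where Abc: "\<forall>s. \<bar>s\<bar> \<le> K' \<longrightarrow> \<bar>realize \<rho> [1, h, 1] [(A, b), (C, c)] (\<lambda>j. s) - G s\<bar> \<le> e"
    using assms e unfolding Good_def by blast
  show "\<exists>A b C c. \<forall>s. \<bar>s\<bar> \<le> K \<longrightarrow> \<bar>realize \<rho> [1, h, 1] [(A, b), (C, c)] (\<lambda>j. s) - G (\<alpha> * s + \<beta>)\<bar> \<le> e"
  proof (intro exI allI impI)
    fix s :: real assume s: "\<bar>s\<bar> \<le> K"
    have "\<bar>\<alpha> * s + \<beta>\<bar> \<le> \<bar>\<alpha>\<bar> * \<bar>s\<bar> + \<bar>\<beta>\<bar>" by (metis abs_mult abs_triangle_ineq)
    also have "\<dots> \<le> \<bar>\<alpha>\<bar> * K + \<bar>\<beta>\<bar>" using s by (simp add: mult_left_mono)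
    finally have "\<bar>\<alpha> * s + \<beta>\<bar> \<le> K'" unfolding K'_def by simp
    then have "\<bar>realize \<rho> [1, h, 1] [(A, b), (C, c)] (\<lambda>j. \<alpha> * s + \<beta>) - G (\<alpha> * s + \<beta>)\<bar> \<le> e"
      using Abc by blast
    moreover have "realize \<rho> [1, h, 1] [(\<lambda>j i. A j i * \<alpha>, \<lambda>j. A j 0 * \<beta> + b j), (C, c)] (\<lambda>j. s)
        = realize \<rho> [1, h, 1] [(A, b), (C, c)] (\<lambda>j. \<alpha> * s + \<beta>)"
      unfolding realize2 by (simp add: algebra_simps)
    ultimately show "\<bar>realize \<rho> [1, h, 1] [(\<lambda>j i. A j i * \<alpha>, \<lambda>j. A j 0 * \<beta> + b j), (C, c)] (\<lambda>j. s) - G (\<alpha> * s + \<beta>)\<bar> \<le> e"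
      by simp
  qed
qed

lemma psi:
  assumes D: "(\<rho> has_real_derivative D) (at p)" "D \<noteq> 0" and B: "B > 0" and \<delta>: "\<delta> > 0"
  shows "\<exists>\<epsilon>>0. \<forall>t. \<bar>t\<bar> \<le> B \<longrightarrow> \<bar>(\<rho> (p + \<epsilon> * t) - \<rho> p) / (\<epsilon> * D) - t\<bar> \<le> \<delta>"
proof -
  define \<eta> where "\<eta> = \<delta> * \<bar>D\<bar> / B"
  have "\<eta> > 0" unfolding \<eta>_def using D B \<delta> by simp
  from D(1) have "(\<lambda>h. (\<rho> (p + h) - \<rho> p) / h) \<midarrow>0\<rightarrow> D" by (simp add: DERIV_def)
  then obtain \<gamma> where \<gamma>: "\<gamma> > 0" "\<forall>h. h \<noteq> 0 \<and> norm (h - 0) < \<gamma> \<longrightarrow> norm ((\<rho> (p + h) - \<rho> p) / h - D) < \<eta>"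
    unfolding LIM_eq using \<open>\<eta> > 0\<close> by blast
  define \<epsilon> where "\<epsilon> = \<gamma> / (2 * B)"
  have \<epsilon>: "\<epsilon> > 0" unfolding \<epsilon>_def using \<gamma> B by simp
  have "\<bar>(\<rho> (p + \<epsilon> * t) - \<rho> p) / (\<epsilon> * D) - t\<bar> \<le> \<delta>" if t: "\<bar>t\<bar> \<le> B" for t
  proof (cases "t = 0")
    case True then show ?thesis using \<delta> by simp
  next
    case False
    define h where "h = \<epsilon> * t"
    have "h \<noteq> 0" unfolding h_def using False \<epsilon> by simp
    have "\<bar>h\<bar> \<le> \<epsilon> * B" unfolding h_def using t \<epsilon> by (simp add: abs_mult mult_left_mono)
    also have "\<epsilon> * B = \<gamma> / 2" unfolding \<epsilon>_def using B by simp
    finally have "\<bar>h\<bar> < \<gamma>" using \<gamma> by simp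
    then have q: "\<bar>(\<rho> (p + h) - \<rho> p) / h - D\<bar> < \<eta>" using \<gamma>(2) \<open>h \<noteq> 0\<close> by simp
    have eq: "(\<rho> (p + \<epsilon> * t) - \<rho> p) / (\<epsilon> * D) - t = ((\<rho> (p + h) - \<rho> p) / h - D) * (t / D)"
      unfolding h_def using \<epsilon> False D(2) by (simp add: field_simps)
    have "\<bar>((\<rho> (p + h) - \<rho> p) / h - D) * (t / D)\<bar> = \<bar>(\<rho> (p + h) - \<rho> p) / h - D\<bar> * (\<bar>t\<bar> / \<bar>D\<bar>)"
      by (simp add: abs_mult)
    also have "\<dots> \<le> \<eta> * (B / \<bar>D\<bar>)"
      using q t D(2) by (intro mult_mono divide_right_mono) auto
    also have "\<dots> = \<delta>" unfolding \<eta>_def using B D(2) by simp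
    finally show ?thesis unfolding eq .
  qed
  then show ?thesis using \<epsilon> by blast
qed

lemma approx:
  assumes D: "(\<rho> has_real_derivative D) (at p)" "D \<noteq> 0"
  shows "\<forall>N\<in>set hs. N \<ge> 1 \<Longrightarrow> d \<ge> 1 \<Longrightarrow> Good \<rho> h G \<Longrightarrow> continuous_on UNIV G \<Longrightarrow> B > 0 \<Longrightarrow> e > 0 \<Longrightarrow>
    \<exists>\<Phi>\<in>NN (d # hs @ [h, 1]). \<forall>x. \<bar>x 0\<bar> \<le> B \<longrightarrow> \<bar>realize \<rho> (d # hs @ [h, 1]) \<Phi> x - G (x 0)\<bar> \<le> e"
proof (induction hs arbitrary: d G B e)
  case Nil
  obtain A b C c where Abc: "\<forall>s. \<bar>s\<bar> \<le> B \<longrightarrow> \<bar>realize \<rho> [1, h, 1] [(A, b), (C, c)] (\<lambda>j. s) - G s\<bar> \<le> e"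
    using Nil.prems unfolding Good_def by blast
  define A' where "A' = (\<lambda>j (i::nat). if i = 0 then A j 0 else (0::real))"
  have R: "realize \<rho> [d, h, 1] [(A', b), (C, c)] x = realize \<rho> [1, h, 1] [(A, b), (C, c)] (\<lambda>j. x 0)" for x
  proof -
    have "(\<Sum>i<d. A' j i * x i) = A j 0 * x 0" for j
    proof -
      have "(\<Sum>i<d. A' j i * x i) = (\<Sum>i<d. if i = 0 then A j 0 * x 0 else 0)"
        unfolding A'_def by (rule sum.cong) auto
      also have "\<dots> = A j 0 * x 0" using Nil.prems(2) by simp
      finally show ?thesis .
    qed
    then show ?thesis unfolding realize2 by simp
  qed
  show ?case
  proof (rule bexI[of _ "[(A', b), (C, c)]"])
    show "[(A', b), (C, c)] \<in> NN (d # [] @ [h, 1])" by (simp add: NN_def)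
    show "\<forall>x. \<bar>x 0\<bar> \<le> B \<longrightarrow> \<bar>realize \<rho> (d # [] @ [h, 1]) [(A', b), (C, c)] x - G (x 0)\<bar> \<le> e"
      using Abc R by simp
  qed
next
  case (Cons h1 hs')
  note prems = Cons.prems
  have h1: "h1 \<ge> 1" "\<forall>N\<in>set hs'. N \<ge> 1" using prems(1) by auto
  have e2: "e / 2 > 0" using prems(6) by simp
  have "uniformly_continuous_on (cbox (- (B + 1)) (B + 1)) G"
    by (rule compact_uniformly_continuous[OF continuous_on_subset[OF prems(4)]]) auto
  then obtain \<delta> where \<delta>: "\<delta> > 0" "\<forall>s\<in>cbox (- (B + 1)) (B + 1). \<forall>s'\<in>cbox (- (B + 1)) (B + 1).
      dist s' s < \<delta> \<longrightarrow> dist (G s') (G s) < e / 2"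
    unfolding uniformly_continuous_on_def using e2 by blast
  define \<delta>' where "\<delta>' = min (\<delta> / 2) 1"
  have "\<delta>' > 0" unfolding \<delta>'_def using \<delta> by simp
  obtain \<epsilon> where \<epsilon>: "\<epsilon> > 0" "\<forall>t. \<bar>t\<bar> \<le> B \<longrightarrow> \<bar>(\<rho> (p + \<epsilon> * t) - \<rho> p) / (\<epsilon> * D) - t\<bar> \<le> \<delta>'"
    using psi[OF D prems(5) \<open>\<delta>' > 0\<close>] by blast
  define G' where "G' = (\<lambda>s. G ((1 / (\<epsilon> * D)) * s + (- \<rho> p / (\<epsilon> * D))))"
  have gG': "Good \<rho> h G'" unfolding G'_def by (rule Good_affine[OF prems(3)])
  have cG': "continuous_on UNIV G'" unfolding G'_def
    by (intro continuous_on_compose2[OF prems(4)] continuous_intros) auto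
  define B' where "B' = \<bar>\<rho> p\<bar> + \<bar>\<epsilon> * D\<bar> * (B + 1) + 1"
  have "0 \<le> \<bar>\<epsilon> * D\<bar> * (B + 1)" using prems(5) by simp
  then have "B' > 0" unfolding B'_def using abs_ge_zero[of "\<rho> p"] by linarith
  obtain \<Phi>' where \<Phi>': "\<Phi>' \<in> NN (h1 # hs' @ [h, 1])"
      "\<forall>y. \<bar>y 0\<bar> \<le> B' \<longrightarrow> \<bar>realize \<rho> (h1 # hs' @ [h, 1]) \<Phi>' y - G' (y 0)\<bar> \<le> e / 2"
    using Cons.IH[OF h1(2) h1(1) gG' cG' \<open>B' > 0\<close> e2] by blast
  define A1 where "A1 = (\<lambda>(j::nat) (i::nat). if j = 0 \<and> i = 0 then \<epsilon> else (0::real))"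
  define b1 where "b1 = (\<lambda>j::nat. if j = 0 then p else (0::real))"
  show ?case
  proof (rule bexI[of _ "(A1, b1) # \<Phi>'"])
    show "(A1, b1) # \<Phi>' \<in> NN (d # (h1 # hs') @ [h, 1])" using \<Phi>'(1) by (simp add: NN_def)
    show "\<forall>x. \<bar>x 0\<bar> \<le> B \<longrightarrow> \<bar>realize \<rho> (d # (h1 # hs') @ [h, 1]) ((A1, b1) # \<Phi>') x - G (x 0)\<bar> \<le> e"
    proof (intro allI impI)
      fix x :: "nat \<Rightarrow> real" assume x: "\<bar>x 0\<bar> \<le> B"
      define y where "y = (\<lambda>j. \<rho> ((\<Sum>i<d. A1 j i * x i) + b1 j))"
      have R: "realize \<rho> (d # (h1 # hs') @ [h, 1]) ((A1, b1) # \<Phi>') x = realize \<rho> (h1 # hs' @ [h, 1]) \<Phi>' y"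
        unfolding realize_def y_def by simp
      have "(\<Sum>i<d. A1 0 i * x i) = (\<Sum>i<d. if i = 0 then \<epsilon> * x 0 else 0)"
        unfolding A1_def by (rule sum.cong) auto
      also have "\<dots> = \<epsilon> * x 0" using prems(2) by simp
      finally have y0: "y 0 = \<rho> (p + \<epsilon> * x 0)" unfolding y_def b1_def by (simp add: add.commute)
      define \<psi> where "\<psi> = (\<rho> (p + \<epsilon> * x 0) - \<rho> p) / (\<epsilon> * D)"
      have \<psi>: "\<bar>\<psi> - x 0\<bar> \<le> \<delta>'" unfolding \<psi>_def using \<epsilon>(2) x by blast
      have y0': "y 0 = \<rho> p + (\<epsilon> * D) * \<psi>" unfolding \<psi>_def y0 using \<epsilon>(1) D(2) by simp
      have "\<bar>\<psi>\<bar> \<le> B + 1" using \<psi> x unfolding \<delta>'_def by linarith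
      then have "\<bar>(\<epsilon> * D) * \<psi>\<bar> \<le> \<bar>\<epsilon> * D\<bar> * (B + 1)" by (simp add: abs_mult mult_left_mono)
      then have "\<bar>y 0\<bar> \<le> B'" unfolding y0' B'_def by linarith
      then have E1: "\<bar>realize \<rho> (h1 # hs' @ [h, 1]) \<Phi>' y - G' (y 0)\<bar> \<le> e / 2" using \<Phi>'(2) by blast
      have "G' (y 0) = G \<psi>" unfolding G'_def y0' using \<epsilon>(1) D(2) by (simp add: field_simps)
      moreover have "\<bar>G \<psi> - G (x 0)\<bar> < e / 2"
      proof -
        have "x 0 \<in> cbox (- (B + 1)) (B + 1)" "\<psi> \<in> cbox (- (B + 1)) (B + 1)"
          using x \<open>\<bar>\<psi>\<bar> \<le> B + 1\<close> by auto
        moreover have "dist \<psi> (x 0) < \<delta>" using \<psi> \<delta>(1) unfolding \<delta>'_def dist_real_def by linarith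
        ultimately show ?thesis using \<delta>(2) by (auto simp: dist_real_def)
      qed
      ultimately show "\<bar>realize \<rho> (d # (h1 # hs') @ [h, 1]) ((A1, b1) # \<Phi>') x - G (x 0)\<bar> \<le> e"
        using E1 unfolding R by linarith
    qed
  qed
qed



lemma Good_lin:
  assumes D: "(\<rho> has_real_derivative D) (at p)" "D \<noteq> 0" and h: "h \<ge> 1"
  shows "Good \<rho> h (\<lambda>s. s)"
  unfolding Good_def
proof (intro allI impI)
  fix K e :: real assume K: "K > 0" and e: "e > 0"
  obtain \<epsilon> where \<epsilon>: "\<epsilon> > 0" "\<forall>t. \<bar>t\<bar> \<le> K \<longrightarrow> \<bar>(\<rho> (p + \<epsilon> * t) - \<rho> p) / (\<epsilon> * D) - t\<bar> \<le> e"
    using psi[OF D K e] by blast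
  define A where "A = (\<lambda>(j::nat) (i::nat). if j = 0 then \<epsilon> else (0::real))"
  define b where "b = (\<lambda>j::nat. if j = 0 then p else (0::real))"
  define C where "C = (\<lambda>(i::nat) (j::nat). if j = 0 then 1 / (\<epsilon> * D) else (0::real))"
  define c where "c = (\<lambda>i::nat. - \<rho> p / (\<epsilon> * D))"
  have R: "realize \<rho> [1, h, 1] [(A, b), (C, c)] (\<lambda>j. s) = (\<rho> (p + \<epsilon> * s) - \<rho> p) / (\<epsilon> * D)" for s
  proof -
    have "realize \<rho> [1, h, 1] [(A, b), (C, c)] (\<lambda>j. s) =
       (\<Sum>j<h. (if j = 0 then 1 / (\<epsilon> * D) else 0) * \<rho> (A j 0 * s + b j)) + c 0"
      unfolding realize2 C_def by simp
    also have "\<dots> = 1 / (\<epsilon> * D) * \<rho> (A 0 0 * s + b 0) + c 0"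
      using h by (subst sum_first) auto
    also have "\<dots> = (\<rho> (p + \<epsilon> * s) - \<rho> p) / (\<epsilon> * D)"
      unfolding A_def b_def c_def using \<epsilon>(1) D(2) by (simp add: field_simps add.commute)
    finally show ?thesis .
  qed
  show "\<exists>A b C c. \<forall>s. \<bar>s\<bar> \<le> K \<longrightarrow> \<bar>realize \<rho> [1, h, 1] [(A, b), (C, c)] (\<lambda>j. s) - s\<bar> \<le> e"
    using R \<epsilon>(2) by metis
qed

lemma Good_deriv:
  assumes C1: "Ck 1 \<rho>" and h: "h \<ge> 2"
  shows "Good \<rho> h (\<lambda>s. deriv \<rho> (s + z))"
  unfolding Good_def
proof (intro allI impI)
  fix K e :: real assume K: "K > 0" and e: "e > 0"
  have dif: "\<And>x. \<rho> differentiable (at x)" and cd: "continuous_on UNIV (deriv \<rho>)"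
    using C1 by (simp_all add: Ck_Suc Ck_0)
  have "uniformly_continuous_on (cbox (z - K - 1) (z + K + 1)) (deriv \<rho>)"
    by (rule compact_uniformly_continuous[OF continuous_on_subset[OF cd]]) auto
  then obtain \<delta> where \<delta>: "\<delta> > 0" "\<forall>s\<in>cbox (z - K - 1) (z + K + 1). \<forall>s'\<in>cbox (z - K - 1) (z + K + 1).
      dist s' s < \<delta> \<longrightarrow> dist (deriv \<rho> s') (deriv \<rho> s) < e"
    unfolding uniformly_continuous_on_def using e by blast
  define \<eta> where "\<eta> = min (\<delta> / 2) (1 / 2)"
  have \<eta>: "\<eta> > 0" "\<eta> < \<delta>" "\<eta> < 1" unfolding \<eta>_def using \<delta> by auto
  obtain k where k: "h = Suc (Suc k)" using h by (metis add_2_eq_Suc le_Suc_ex)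
  define A where "A = (\<lambda>(j::nat) (i::nat). (1::real))"
  define b where "b = (\<lambda>j::nat. if j = 0 then z + \<eta> else z)"
  define C where "C = (\<lambda>(i::nat) (j::nat). if j = 0 then 1 / \<eta> else if j = 1 then - 1 / \<eta> else (0::real))"
  define c where "c = (\<lambda>i::nat. (0::real))"
  have R: "realize \<rho> [1, h, 1] [(A, b), (C, c)] (\<lambda>j. s) = (\<rho> (s + z + \<eta>) - \<rho> (s + z)) / \<eta>" for s
  proof -
    have "realize \<rho> [1, h, 1] [(A, b), (C, c)] (\<lambda>j. s) =
       (\<Sum>j<Suc (Suc k). C 0 j * \<rho> (s + b j))"
      unfolding realize2 A_def c_def k by simp
    also have "\<dots> = C 0 0 * \<rho> (s + b 0) + C 0 1 * \<rho> (s + b 1) + (\<Sum>j<k. C 0 (Suc (Suc j)) * \<rho> (s + b (Suc (Suc j))))"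
      by (simp only: sum.lessThan_Suc_shift) simp
    also have "\<dots> = (\<rho> (s + z + \<eta>) - \<rho> (s + z)) / \<eta>"
      unfolding C_def b_def using \<eta>(1) by (simp add: field_simps add.assoc)
    finally show ?thesis .
  qed
  have "\<bar>realize \<rho> [1, h, 1] [(A, b), (C, c)] (\<lambda>j. s) - deriv \<rho> (s + z)\<bar> \<le> e" if s: "\<bar>s\<bar> \<le> K" for s
  proof -
    have "\<forall>x. s + z \<le> x \<and> x \<le> s + z + \<eta> \<longrightarrow> (\<rho> has_real_derivative deriv \<rho> x) (at x)"
      using dif diff_DERIV by blast
    then obtain \<xi> where \<xi>: "s + z < \<xi>" "\<xi> < s + z + \<eta>" "\<rho> (s + z + \<eta>) - \<rho> (s + z) = (s + z + \<eta> - (s + z)) * deriv \<rho> \<xi>"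
      using MVT2[of "s + z" "s + z + \<eta>" \<rho> "deriv \<rho>"] \<eta>(1) by auto
    have "(\<rho> (s + z + \<eta>) - \<rho> (s + z)) / \<eta> = deriv \<rho> \<xi>" using \<xi>(3) \<eta>(1) by simp
    moreover have "\<xi> \<in> cbox (z - K - 1) (z + K + 1)" "s + z \<in> cbox (z - K - 1) (z + K + 1)"
      using \<xi> s \<eta> by auto
    moreover have "dist \<xi> (s + z) < \<delta>" using \<xi> \<eta> by (simp add: dist_real_def)
    ultimately have "\<bar>deriv \<rho> \<xi> - deriv \<rho> (s + z)\<bar> < e" "(\<rho> (s + z + \<eta>) - \<rho> (s + z)) / \<eta> = deriv \<rho> \<xi>"
      using \<delta>(2) by (auto simp: dist_real_def)
    then show ?thesis using R by simp
  qed
  then show "\<exists>A b C c. \<forall>s. \<bar>s\<bar> \<le> K \<longrightarrow> \<bar>realize \<rho> [1, h, 1] [(A, b), (C, c)] (\<lambda>j. s) - deriv \<rho> (s + z)\<bar> \<le> e"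
    by blast
qed

lemma Good_pow:
  assumes s0: "s0 > 0" and km: "k < m" and Pm: "\<forall>x. P x \<longrightarrow> \<bar>\<rho> x - x ^ m\<bar> \<le> s0"
    and Pk: "\<forall>x. \<not> P x \<longrightarrow> \<bar>\<rho> x - x ^ k\<bar> \<le> s0"
    and Ps: "\<forall>x c. c > 0 \<longrightarrow> (P (c * x) \<longleftrightarrow> P x)" and h: "h \<ge> 1"
  shows "Good \<rho> h (\<lambda>s. if P s then s ^ m else 0)"
  unfolding Good_def
proof (intro allI impI)
  fix K e :: real assume K: "K > 0" and e: "e > 0"
  define M0 where "M0 = K ^ k + s0"
  have "K ^ k > 0" using K by simp
  then have M0: "M0 > 0" "s0 \<le> M0" unfolding M0_def using s0 by linarith+
  obtain n :: nat where n: "M0 / e < real n" using reals_Archimedean2 by blast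
  define N where "N = real n + 1"
  have N: "N \<ge> 1" "N > 0" "M0 / e < N" unfolding N_def using n by auto
  have NM: "M0 / N < e" using N e by (simp add: field_simps)
  define A where "A = (\<lambda>(j::nat) (i::nat). if j = 0 then N else (0::real))"
  define b where "b = (\<lambda>j::nat. (0::real))"
  define C where "C = (\<lambda>(i::nat) (j::nat). if j = 0 then 1 / N ^ m else (0::real))"
  define c where "c = (\<lambda>i::nat. (0::real))"
  have R: "realize \<rho> [1, h, 1] [(A, b), (C, c)] (\<lambda>j. s) = \<rho> (N * s) / N ^ m" for s
  proof -
    have "realize \<rho> [1, h, 1] [(A, b), (C, c)] (\<lambda>j. s) =
       (\<Sum>j<h. (if j = 0 then 1 / N ^ m else 0) * \<rho> (A j 0 * s + b j)) + c 0"
      unfolding realize2 C_def by simp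
    also have "\<dots> = 1 / N ^ m * \<rho> (A 0 0 * s + b 0) + c 0"
      using h by (subst sum_first) auto
    also have "\<dots> = \<rho> (N * s) / N ^ m"
      unfolding A_def b_def c_def by simp
    finally show ?thesis .
  qed
  have Nm: "N ^ m = N ^ (m - 1) * N" using km by (metis Suc_diff_1 gr0I not_less0 power_Suc2)
  have N1: "N ^ (m - 1) \<ge> 1" using N(1) by simp
  have Nk: "N ^ k \<le> N ^ (m - 1)" using N(1) km by (intro power_increasing) auto
  have key: "\<bar>\<rho> (N * s) - N ^ m * (if P s then s ^ m else 0)\<bar> \<le> N ^ (m - 1) * M0" if s: "\<bar>s\<bar> \<le> K" for s
  proof (cases "P s")
    case True
    then have "P (N * s)" using Ps N(2) by blast
    then have "\<bar>\<rho> (N * s) - (N * s) ^ m\<bar> \<le> s0" using Pm by blast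
    moreover have "s0 \<le> N ^ (m - 1) * M0" using N1 M0 s0 by (metis mult_1 mult_mono order_trans zero_le_one less_imp_le)
    ultimately show ?thesis using True by (simp add: power_mult_distrib)
  next
    case False
    then have "\<not> P (N * s)" using Ps N(2) by blast
    then have "\<bar>\<rho> (N * s) - (N * s) ^ k\<bar> \<le> s0" using Pk by blast
    then have "\<bar>\<rho> (N * s)\<bar> \<le> \<bar>(N * s) ^ k\<bar> + s0" by linarith
    also have "\<bar>(N * s) ^ k\<bar> = N ^ k * \<bar>s\<bar> ^ k" using N(2) by (simp add: power_abs power_mult_distrib abs_mult)
    also have "\<dots> \<le> N ^ (m - 1) * K ^ k"
      using Nk s N(2) by (intro mult_mono power_mono) auto
    also have "s0 \<le> N ^ (m - 1) * s0" using N1 s0 by simp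
    finally have "\<bar>\<rho> (N * s)\<bar> \<le> N ^ (m - 1) * M0" unfolding M0_def by (simp add: algebra_simps)
    then show ?thesis using False by simp
  qed
  have "\<bar>realize \<rho> [1, h, 1] [(A, b), (C, c)] (\<lambda>j. s) - (if P s then s ^ m else 0)\<bar> \<le> e" if s: "\<bar>s\<bar> \<le> K" for s
  proof -
    have "realize \<rho> [1, h, 1] [(A, b), (C, c)] (\<lambda>j. s) - (if P s then s ^ m else 0)
        = (\<rho> (N * s) - N ^ m * (if P s then s ^ m else 0)) / N ^ m"
      unfolding R using N(2) by (simp add: field_simps)
    then have "\<bar>realize \<rho> [1, h, 1] [(A, b), (C, c)] (\<lambda>j. s) - (if P s then s ^ m else 0)\<bar>
        = \<bar>\<rho> (N * s) - N ^ m * (if P s then s ^ m else 0)\<bar> / N ^ m" using N(2) by simp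
    also have "\<dots> \<le> N ^ (m - 1) * M0 / N ^ m"
      using key[OF s] N(2) by (intro divide_right_mono) auto
    also have "\<dots> = M0 / N" unfolding Nm using N(2) by simp
    finally show ?thesis using NM by simp
  qed
  then show "\<exists>A b C c. \<forall>s. \<bar>s\<bar> \<le> K \<longrightarrow> \<bar>realize \<rho> [1, h, 1] [(A, b), (C, c)] (\<lambda>j. s) - (if P s then s ^ m else 0)\<bar> \<le> e"
    by blast
qed



lemma line_in_cube: "d \<ge> 1 \<Longrightarrow> \<bar>t\<bar> \<le> B \<Longrightarrow> (\<lambda>j. if j = 0 then t else 0) \<in> cube d B"
  unfolding cube_def by (auto simp: abs_le_iff)

lemma final:
  assumes d1: "d \<ge> 1" and B: "B > 0" and hs: "\<forall>N\<in>set hs. N \<ge> 1"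
    and D: "(\<rho> has_real_derivative D) (at p)" "D \<noteq> 0" and G: "Good \<rho> h G" "continuous_on UNIV G"
    and nr: "\<And>\<Phi>. \<Phi> \<in> NN (d # hs @ [h, 1]) \<Longrightarrow>
       (\<forall>t. \<bar>t\<bar> \<le> B \<longrightarrow> realize \<rho> (d # hs @ [h, 1]) \<Phi> (\<lambda>j. if j = 0 then t else 0) = G t) \<Longrightarrow> False"
  shows "\<exists>(\<Phi>s :: nat \<Rightarrow> layer list) (g :: (nat \<Rightarrow> real) \<Rightarrow> real).
           (\<forall>n. \<Phi>s n \<in> NN (d # (hs @ [h]) @ [1]))
         \<and> continuous_on (cube d B) g
         \<and> uniform_limit (cube d B) (\<lambda>n. realize \<rho> (d # (hs @ [h]) @ [1]) (\<Phi>s n)) g sequentially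
         \<and> (\<forall>\<Phi>\<in>NN (d # (hs @ [h]) @ [1]). \<exists>x\<in>cube d B. realize \<rho> (d # (hs @ [h]) @ [1]) \<Phi> x \<noteq> g x)"
proof -
  let ?S = "d # hs @ [h, 1]"
  have S: "d # (hs @ [h]) @ [1] = ?S" by simp
  define Q where "Q = (\<lambda>(n::nat) \<Phi>. \<Phi> \<in> NN ?S \<and> (\<forall>x. \<bar>x 0\<bar> \<le> B \<longrightarrow> \<bar>realize \<rho> ?S \<Phi> x - G (x 0)\<bar> \<le> 1 / real (Suc n)))"
  have "\<forall>n. \<exists>\<Phi>. Q n \<Phi>"
  proof
    fix n
    have "1 / real (Suc n) > 0" by simp
    note A = approx[OF D hs d1 G B this]
    show "\<exists>\<Phi>. Q n \<Phi>" unfolding Q_def using A unfolding Bex_def .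
  qed
  then obtain \<Phi>s where \<Phi>s0: "\<forall>n. Q n (\<Phi>s n)" by (rule choice[THEN exE])
  have \<Phi>s: "\<And>n. \<Phi>s n \<in> NN ?S"
    "\<And>n x. \<bar>x 0\<bar> \<le> B \<Longrightarrow> \<bar>realize \<rho> ?S (\<Phi>s n) x - G (x 0)\<bar> \<le> 1 / real (Suc n)"
    using \<Phi>s0 unfolding Q_def by simp_all
  have cube0: "\<bar>x 0\<bar> \<le> B" if "x \<in> cube d B" for x
    using that d1 unfolding cube_def by (auto simp: abs_le_iff)
  show ?thesis
    unfolding S
  proof (intro exI[of _ \<Phi>s] exI[of _ "\<lambda>x. G (x 0)"] conjI allI ballI)
    show "\<Phi>s n \<in> NN ?S" for n by (rule \<Phi>s(1))
    show "continuous_on (cube d B) (\<lambda>x. G (x 0))"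
      by (rule continuous_on_compose2[OF G(2) continuous_on_subset[OF continuous_on_product_coordinates]]) auto
    show "uniform_limit (cube d B) (\<lambda>n. realize \<rho> ?S (\<Phi>s n)) (\<lambda>x. G (x 0)) sequentially"
    proof (rule uniform_limitI)
      fix e :: real assume "e > 0"
      then obtain N :: nat where N: "N > 0" "inverse (real N) < e" using ex_inverse_of_nat_less by blast
      show "\<forall>\<^sub>F n in sequentially. \<forall>x\<in>cube d B. dist (realize \<rho> ?S (\<Phi>s n) x) (G (x 0)) < e"
        unfolding eventually_sequentially
      proof (intro exI[of _ N] allI impI ballI)
        fix n x assume n: "N \<le> n" and x: "x \<in> cube d B"
        have "1 / real (Suc n) \<le> inverse (real N)" using n N(1) by (simp add: field_simps)
        then show "dist (realize \<rho> ?S (\<Phi>s n) x) (G (x 0)) < e"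
          using \<Phi>s(2)[of x n, OF cube0[OF x]] N(2) by (simp add: dist_real_def)
      qed
    qed
    fix \<Phi> assume \<Phi>: "\<Phi> \<in> NN ?S"
    show "\<exists>x\<in>cube d B. realize \<rho> ?S \<Phi> x \<noteq> G (x 0)"
    proof (rule ccontr)
      assume "\<not> ?thesis"
      then have "\<forall>x\<in>cube d B. realize \<rho> ?S \<Phi> x = G (x 0)" by blast
      then have "\<forall>t. \<bar>t\<bar> \<le> B \<longrightarrow> realize \<rho> ?S \<Phi> (\<lambda>j. if j = 0 then t else 0) = G t"
      proof (intro allI impI)
        fix t :: real assume "\<bar>t\<bar> \<le> B"
        then have "(\<lambda>j. if j = 0 then t else 0) \<in> cube d B" by (rule line_in_cube[OF d1])
        note bspec[OF \<open>\<forall>x\<in>cube d B. realize \<rho> ?S \<Phi> x = G (x 0)\<close> this]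
        then show "realize \<rho> ?S \<Phi> (\<lambda>j. if j = 0 then t else 0) = G t" by simp
      qed
      then show False using nr[OF \<Phi>] by blast
    qed
  qed
qed

lemma realize_bounded:
  assumes M: "\<forall>y. \<bar>\<rho> y\<bar> \<le> M"
  shows "\<Phi> \<in> NN (d # hs @ [h, 1]) \<Longrightarrow> \<exists>C. \<forall>x. \<bar>realize \<rho> (d # hs @ [h, 1]) \<Phi> x\<bar> \<le> C"
proof (induction hs arbitrary: d \<Phi>)
  case Nil
  then have "length \<Phi> = 2" unfolding NN_def by simp
  then have "\<exists>L1 L2. \<Phi> = [L1, L2]" by (auto simp: numeral_2_eq_2 length_Suc_conv)
  then obtain L1 L2 where "\<Phi> = [L1, L2]" by blast
  moreover obtain A b where "L1 = (A, b)" by fastforce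
  moreover obtain C c where "L2 = (C, c)" by fastforce
  ultimately have \<Phi>: "\<Phi> = [(A, b), (C, c)]" by simp
  have "\<bar>realize \<rho> (d # [] @ [h, 1]) \<Phi> x\<bar> \<le> (\<Sum>j<h. \<bar>C 0 j\<bar> * M) + \<bar>c 0\<bar>" for x
  proof -
    have "\<bar>\<Sum>j<h. C 0 j * \<rho> ((\<Sum>i<d. A j i * x i) + b j)\<bar> \<le> (\<Sum>j<h. \<bar>C 0 j * \<rho> ((\<Sum>i<d. A j i * x i) + b j)\<bar>)"
      by (rule sum_abs)
    also have "\<dots> \<le> (\<Sum>j<h. \<bar>C 0 j\<bar> * M)"
      by (rule sum_mono) (simp only: abs_mult, rule mult_left_mono[OF M[rule_format] abs_ge_zero])
    moreover have "realize \<rho> (d # [] @ [h, 1]) \<Phi> x = (\<Sum>j<h. C 0 j * \<rho> ((\<Sum>i<d. A j i * x i) + b j)) + c 0"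
      unfolding \<Phi> append.simps(1) by (rule realize2)
    ultimately show ?thesis by linarith
  qed
  then show ?case by blast
next
  case (Cons h1 hs')
  then have len: "length \<Phi> = Suc (length (h1 # hs' @ [h, 1]) - 1)" unfolding NN_def by simp
  obtain L1 \<Phi>' where "\<Phi> = L1 # \<Phi>'" "length \<Phi>' = length (h1 # hs' @ [h, 1]) - 1"
    using len by (cases \<Phi>) auto
  moreover obtain A1 b1 where "L1 = (A1, b1)" by fastforce
  ultimately have \<Phi>: "\<Phi> = (A1, b1) # \<Phi>'" "\<Phi>' \<in> NN (h1 # hs' @ [h, 1])" unfolding NN_def by simp_all
  obtain C where C: "\<forall>y. \<bar>realize \<rho> (h1 # hs' @ [h, 1]) \<Phi>' y\<bar> \<le> C" using Cons.IH[OF \<Phi>(2)] by blast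
  have eq: "realize \<rho> (d # (h1 # hs') @ [h, 1]) \<Phi> x = realize \<rho> (h1 # hs' @ [h, 1]) \<Phi>' (\<lambda>j. \<rho> ((\<Sum>i<d. A1 j i * x i) + b1 j))" for x
  proof -
    have ne: "hs' @ [h, 1] \<noteq> []" by simp
    have "(d # (h1 # hs') @ [h, 1]) = d # h1 # (hs' @ [h, 1])" by simp
    then show ?thesis unfolding \<Phi> realize_def
      by (simp only: nn_eval.simps(1) Let_def ne if_False)
  qed
  show ?case
  proof (intro exI[of _ C] allI)
    fix x show "\<bar>realize \<rho> (d # (h1 # hs') @ [h, 1]) \<Phi> x\<bar> \<le> C" unfolding eq using C by blast
  qed
qed



abbreviation (input) concl where
  "concl \<rho> d B hid \<equiv> \<exists>(\<Phi>s :: nat \<Rightarrow> layer list) (g :: (nat \<Rightarrow> real) \<Rightarrow> real).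
           (\<forall>n. \<Phi>s n \<in> NN (d # hid @ [1]))
         \<and> continuous_on (cube d B) g
         \<and> uniform_limit (cube d B) (\<lambda>n. realize \<rho> (d # hid @ [1]) (\<Phi>s n)) g sequentially
         \<and> (\<forall>\<Phi>\<in>NN (d # hid @ [1]). \<exists>x\<in>cube d B. realize \<rho> (d # hid @ [1]) \<Phi> x \<noteq> g x)"

lemma const_of_zero_deriv:
  assumes "\<forall>x. \<exists>D. (\<rho> has_real_derivative D) (at x)" "\<not> (\<exists>p D. (\<rho> has_real_derivative D) (at p) \<and> D \<noteq> 0)"
  shows "\<rho> x = \<rho> y"
proof -
  have "\<forall>x. (\<rho> has_real_derivative 0) (at x)" using assms by metis
  then show ?thesis by (rule DERIV_isconst_all)
qed

lemma case_i:
  assumes d1: "d \<ge> 1" and B: "B > 0" and hs: "\<forall>N\<in>set hs. N \<ge> 1" and h: "h \<ge> 2"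
    and C1: "Ck 1 \<rho>" and nC: "\<not> Cinf \<rho>"
  shows "concl \<rho> d B (hs @ [h])"
proof -
  have ex: "\<exists>K. \<not> Ck K \<rho>" using nC unfolding Cinf_def by blast
  define K where "K = (LEAST K. \<not> Ck K \<rho>)"
  have nK: "\<not> Ck K \<rho>" unfolding K_def using ex by (metis LeastI)
  have C0: "Ck 0 \<rho>" using C1 Ck_down by auto
  have "K \<noteq> 0" using nK C0 by metis
  moreover have "K \<noteq> 1" using nK C1 by metis
  ultimately
  obtain k where k: "K = Suc (Suc k)" by (metis One_nat_def not0_implies_Suc)
  have Ck: "Ck (Suc k) \<rho>" using not_less_Least[of "Suc k" "\<lambda>K. \<not> Ck K \<rho>"] unfolding K_def[symmetric] k by auto
  have dif: "\<And>x. \<rho> differentiable (at x)" using C1 by (simp add: Ck_Suc)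
  have "\<not> Ck (Suc k) (deriv \<rho>)" using nK dif unfolding k by (simp add: Ck_Suc)
  then obtain z where z: "\<not> LocCk (Suc k) (deriv \<rho>) z" unfolding Ck_LocCk by blast
  have "\<exists>p D. (\<rho> has_real_derivative D) (at p) \<and> D \<noteq> 0"
  proof (rule ccontr)
    assume a: "\<not> ?thesis"
    have "\<rho> x = \<rho> 0" for x by (rule const_of_zero_deriv[OF _ a]) (use dif diff_DERIV in blast)
    then have "\<rho> = (\<lambda>x. \<rho> 0)" by auto
    then have "Cinf \<rho>" unfolding Cinf_def using Ck_const by metis
    then show False using nC by blast
  qed
  then obtain p D where D: "(\<rho> has_real_derivative D) (at p)" "D \<noteq> 0" by blast
  have cd: "continuous_on UNIV (deriv \<rho>)" using C1 by (simp add: Ck_Suc Ck_0)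
  have G: "Good \<rho> h (\<lambda>s. deriv \<rho> (s + z))" by (rule Good_deriv[OF C1 h])
  have Gc: "continuous_on UNIV (\<lambda>s. deriv \<rho> (s + z))"
    by (rule continuous_on_compose2[OF cd]) (auto intro!: continuous_intros)
  show ?thesis
  proof (rule final[OF d1 B hs D G Gc])
    fix \<Phi> assume "\<Phi> \<in> NN (d # hs @ [h, 1])"
      and R: "\<forall>t. \<bar>t\<bar> \<le> B \<longrightarrow> realize \<rho> (d # hs @ [h, 1]) \<Phi> (\<lambda>j. if j = 0 then t else 0) = deriv \<rho> (t + z)"
    define Rl where "Rl = (\<lambda>t. nn_eval \<rho> (d # hs @ [h, 1]) \<Phi> (\<lambda>j. if j = 0 then t else 0) 0)"
    have "Ck (Suc k) Rl" unfolding Rl_def by (rule Ck_line[OF Ck])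
    moreover have "Ck (Suc k) (\<lambda>s. s + (- z))" by (rule Ck_add[OF Ck_id Ck_const])
    ultimately have HC: "Ck (Suc k) (\<lambda>s. Rl (s + (- z)))"
      by (rule Ck_compose[of "Suc k" Rl "\<lambda>s. s + (- z)"])
    have eq: "\<forall>s\<in>ball z B. deriv \<rho> s = Rl (s + (- z))"
    proof
      fix s assume "s \<in> ball z B"
      then have "\<bar>s - z\<bar> \<le> B" by (simp add: dist_real_def abs_minus_commute)
      then show "deriv \<rho> s = Rl (s + (- z))" using R unfolding Rl_def realize_def by force
    qed
    have "LocCk (Suc k) (deriv \<rho>) z"
      by (rule LocCk_local[OF open_ball _ eq]) (use B HC Ck_LocCk in auto)
    then show False using z by blast
  qed
qed



lemma case_ii:
  assumes d1: "d \<ge> 1" and B: "B > 0" and hs: "\<forall>N\<in>set hs. N \<ge> 1" and h: "h \<ge> 1"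
    and bd: "bounded (range \<rho>)" and an: "real_analytic \<rho>" and nc: "\<exists>x y. \<rho> x \<noteq> \<rho> y"
  shows "concl \<rho> d B (hs @ [h])"
proof -
  have H: "Hol \<rho>" by (rule analytic_Hol[OF an])
  have "\<exists>p D. (\<rho> has_real_derivative D) (at p) \<and> D \<noteq> 0"
  proof (rule ccontr)
    assume a: "\<not> ?thesis"
    have "\<rho> x = \<rho> y" for x y by (rule const_of_zero_deriv[OF _ a]) (use Hol_deriv[OF H] in blast)
    then show False using nc by blast
  qed
  then obtain p D where D: "(\<rho> has_real_derivative D) (at p)" "D \<noteq> 0" by blast
  obtain M where M: "\<forall>y. \<bar>\<rho> y\<bar> \<le> M" using bd unfolding bounded_pos by auto
  show ?thesis
  proof (rule final[OF d1 B hs D Good_lin[OF D h] continuous_on_id])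
    fix \<Phi> assume \<Phi>: "\<Phi> \<in> NN (d # hs @ [h, 1])"
      and R: "\<forall>t. \<bar>t\<bar> \<le> B \<longrightarrow> realize \<rho> (d # hs @ [h, 1]) \<Phi> (\<lambda>j. if j = 0 then t else 0) = t"
    define Rl where "Rl = (\<lambda>t. nn_eval \<rho> (d # hs @ [h, 1]) \<Phi> (\<lambda>j. if j = 0 then t else 0) 0)"
    have "Hol Rl" unfolding Rl_def by (rule Hol_line[OF H])
    then have "Hol (\<lambda>t. Rl t + (- 1) * t)" by (intro Hol_add Hol_cmul Hol_id)
    moreover have "- B < B" using B by simp
    moreover have "\<forall>t. - B < t \<and> t < B \<longrightarrow> Rl t + (- 1) * t = 0"
      using R unfolding Rl_def realize_def by (auto simp: abs_le_iff)
    ultimately have z: "Rl t + (- 1) * t = 0" for t by (rule Hol_zero)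
    obtain C where C: "\<forall>x. \<bar>realize \<rho> (d # hs @ [h, 1]) \<Phi> x\<bar> \<le> C"
      using realize_bounded[OF M \<Phi>] by blast
    have "\<bar>Rl (\<bar>C\<bar> + 1)\<bar> \<le> C" using C unfolding Rl_def realize_def by blast
    moreover have "Rl (\<bar>C\<bar> + 1) = \<bar>C\<bar> + 1" using z[of "\<bar>C\<bar> + 1"] by simp
    ultimately show False by simp
  qed
qed

lemma seq_pos: "B > 0 \<Longrightarrow> (\<lambda>n. B / 2 * inverse (real (Suc n))) \<longlonglongrightarrow> 0"
  using tendsto_mult_right_zero[OF LIMSEQ_inverse_real_of_nat, of "B / 2"] by simp

lemma seq_pos_in: "B > 0 \<Longrightarrow> 0 < B / 2 * inverse (real (Suc n)) \<and> B / 2 * inverse (real (Suc n)) < B"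
proof -
  assume B: "B > 0"
  have "inverse (real (Suc n)) \<le> 1" by (simp add: inverse_le_1_iff)
  then have "B / 2 * inverse (real (Suc n)) \<le> B / 2" using B by (simp add: mult_left_le)
  then show ?thesis using B by simp
qed

lemma power_big:
  fixes c s0 y :: real
  assumes "\<bar>y\<bar> = \<bar>c\<bar> + s0 + 1" "n \<ge> 1" "s0 > 0"
  shows "\<bar>c - y ^ n\<bar> > s0"
proof -
  have "\<bar>y\<bar> \<ge> 1" using assms by simp
  then have "\<bar>y\<bar> \<le> \<bar>y\<bar> ^ n" using assms(2) by (intro self_le_power) auto
  then have "\<bar>y ^ n\<bar> \<ge> \<bar>c\<bar> + s0 + 1" using assms(1) by (simp add: power_abs)
  then show ?thesis by linarith
qed

lemma case_iii:
  assumes d1: "d \<ge> 1" and B: "B > 0" and hs: "\<forall>N\<in>set hs. N \<ge> 1" and h: "h \<ge> 1"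
    and ah: "approx_homogeneous \<rho> r q" and rq: "r \<noteq> q" and C: "Ck (max r q) \<rho>"
  shows "concl \<rho> d B (hs @ [h])"
proof -
  obtain s0 where s0: "s0 > 0" "\<forall>x\<ge>0. \<bar>\<rho> x - x ^ r\<bar> \<le> s0" "\<forall>x\<le>0. \<bar>\<rho> x - x ^ q\<bar> \<le> s0"
    using ah unfolding approx_homogeneous_def by blast
  define m where "m = max r q"
  have m1: "m \<ge> 1" using rq unfolding m_def by linarith
  have C1: "Ck 1 \<rho>" using Ck_le[OF m1] C unfolding m_def by blast
  have dif: "\<And>x. \<rho> differentiable (at x)" using C1 by (simp add: Ck_Suc)
  have "\<exists>p D. (\<rho> has_real_derivative D) (at p) \<and> D \<noteq> 0"
  proof (rule ccontr)
    assume a: "\<not> ?thesis"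
    have cst: "\<rho> x = \<rho> 0" for x by (rule const_of_zero_deriv[OF _ a]) (use dif diff_DERIV in blast)
    define c where "c = \<rho> 0"
    show False
    proof (cases "r \<ge> 1")
      case True
      define y where "y = \<bar>c\<bar> + s0 + 1"
      have "y \<ge> 0" "\<bar>y\<bar> = \<bar>c\<bar> + s0 + 1" unfolding y_def using s0(1) by auto
      then have "\<bar>c - y ^ r\<bar> > s0" "\<bar>\<rho> y - y ^ r\<bar> \<le> s0" using power_big[of y c s0 r] True s0 by auto
      then show False using cst[of y] unfolding c_def by simp
    next
      case False
      then have "q \<ge> 1" using rq by simp
      define y where "y = - (\<bar>c\<bar> + s0 + 1)"
      have "y \<le> 0" "\<bar>y\<bar> = \<bar>c\<bar> + s0 + 1" unfolding y_def using s0(1) by auto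
      then have "\<bar>c - y ^ q\<bar> > s0" "\<bar>\<rho> y - y ^ q\<bar> \<le> s0" using power_big[of y c s0 q] \<open>q \<ge> 1\<close> s0 by auto
      then show False using cst[of y] unfolding c_def by simp
    qed
  qed
  then obtain p D where D: "(\<rho> has_real_derivative D) (at p)" "D \<noteq> 0" by blast
  have X: "(\<lambda>n. B / 2 * inverse (real (Suc n))) \<longlonglongrightarrow> 0" "\<forall>n. B / 2 * inverse (real (Suc n)) \<in> {0<..<B}"
    using seq_pos[OF B] seq_pos_in[OF B] by auto
  have Y: "(\<lambda>n. - (B / 2 * inverse (real (Suc n)))) \<longlonglongrightarrow> 0" "\<forall>n. - (B / 2 * inverse (real (Suc n))) \<in> {-B<..<0}"
    using tendsto_minus[OF seq_pos[OF B]] seq_pos_in[OF B] by auto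
  show ?thesis
  proof (cases "q < r")
    case True
    then have mr: "m = r" unfolding m_def by simp
    define G where "G = (\<lambda>s::real. if 0 \<le> s then s ^ m else 0)"
    have Gm: "G = (\<lambda>s. (max s 0) ^ m)" unfolding G_def using m1 by (auto simp: max_def)
    have Gc: "continuous_on UNIV G" unfolding Gm by (intro continuous_intros)
    have Good: "Good \<rho> h G" unfolding G_def
      by (rule Good_pow[OF s0(1) True[folded mr]]) (use s0 mr h in \<open>auto simp: zero_le_mult_iff\<close>)
    show ?thesis
    proof (rule final[OF d1 B hs D Good Gc])
      fix \<Phi> assume \<Phi>: "\<Phi> \<in> NN (d # hs @ [h, 1])"
        and R: "\<forall>t. \<bar>t\<bar> \<le> B \<longrightarrow> realize \<rho> (d # hs @ [h, 1]) \<Phi> (\<lambda>j. if j = 0 then t else 0) = G t"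
      define Rl where "Rl = (\<lambda>t. nn_eval \<rho> (d # hs @ [h, 1]) \<Phi> (\<lambda>j. if j = 0 then t else 0) 0)"
      have "Ck m Rl" unfolding Rl_def by (rule Ck_line) (use C m_def in simp)
      moreover have "\<forall>t\<in>{0<..<B}. Rl t = t ^ m" using R unfolding Rl_def realize_def G_def by auto
      moreover have "\<forall>t\<in>{-B<..<0}. Rl t = 0" using R unfolding Rl_def realize_def G_def by auto
      ultimately show False using jump[of m Rl "{0<..<B}" "{-B<..<0}", OF _ open_greaterThanLessThan open_greaterThanLessThan _ _ X(1) X(2) Y(1) Y(2)] by blast
    qed
  next
    case False
    then have True: "r < q" using rq by simp
    then have mr: "m = q" unfolding m_def by simp
    define G where "G = (\<lambda>s::real. if s \<le> 0 then s ^ m else 0)"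
    have Gm: "G = (\<lambda>s. (min s 0) ^ m)" unfolding G_def using m1 by (auto simp: min_def)
    have Gc: "continuous_on UNIV G" unfolding Gm by (intro continuous_intros)
    have Good: "Good \<rho> h G" unfolding G_def
      by (rule Good_pow[OF s0(1) True[folded mr]]) (use s0 mr h in \<open>auto simp: mult_le_0_iff\<close>)
    show ?thesis
    proof (rule final[OF d1 B hs D Good Gc])
      fix \<Phi> assume \<Phi>: "\<Phi> \<in> NN (d # hs @ [h, 1])"
        and R: "\<forall>t. \<bar>t\<bar> \<le> B \<longrightarrow> realize \<rho> (d # hs @ [h, 1]) \<Phi> (\<lambda>j. if j = 0 then t else 0) = G t"
      define Rl where "Rl = (\<lambda>t. nn_eval \<rho> (d # hs @ [h, 1]) \<Phi> (\<lambda>j. if j = 0 then t else 0) 0)"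
      have "Ck m Rl" unfolding Rl_def by (rule Ck_line) (use C m_def in simp)
      moreover have "\<forall>t\<in>{-B<..<0}. Rl t = t ^ m" using R unfolding Rl_def realize_def G_def by auto
      moreover have "\<forall>t\<in>{0<..<B}. Rl t = 0" using R unfolding Rl_def realize_def G_def by auto
      ultimately show False using jump[of m Rl "{-B<..<0}" "{0<..<B}", OF _ open_greaterThanLessThan open_greaterThanLessThan _ _ Y(1) Y(2) X(1) X(2)] by blast
    qed
  qed
qed


theorem theorem3p3:
  fixes d :: nat and hidden :: "nat list" and B :: real and \<rho> :: "real \<Rightarrow> real"
  assumes "d \<ge> 1" and "hidden \<noteq> []" and "\<forall>N\<in>set hidden. N \<ge> 1"
    and "B > 0"
    and "(last hidden \<ge> 2 \<and> Ck 1 \<rho> \<and> \<not> Cinf \<rho>)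
       \<or> (last hidden \<ge> 2 \<and> bounded (range \<rho>) \<and> real_analytic \<rho> \<and> (\<exists>x y. \<rho> x \<noteq> \<rho> y))
       \<or> (\<exists>r q. approx_homogeneous \<rho> r q \<and> r \<noteq> q \<and> Ck (max r q) \<rho>)"
  shows "\<exists>(\<Phi>s :: nat \<Rightarrow> layer list) (g :: (nat \<Rightarrow> real) \<Rightarrow> real).
           (\<forall>n. \<Phi>s n \<in> NN (d # hidden @ [1]))
         \<and> continuous_on (cube d B) g
         \<and> uniform_limit (cube d B) (\<lambda>n. realize \<rho> (d # hidden @ [1]) (\<Phi>s n)) g sequentially
         \<and> (\<forall>\<Phi>\<in>NN (d # hidden @ [1]). \<exists>x\<in>cube d B. realize \<rho> (d # hidden @ [1]) \<Phi> x \<noteq> g x)"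
proof -
  obtain hs h where hid: "hidden = hs @ [h]" using assms(2) by (metis append_butlast_last_id)
  have hs: "\<forall>N\<in>set hs. N \<ge> 1" and h: "h \<ge> 1" using assms(3) unfolding hid by auto
  have lh: "last hidden = h" unfolding hid by simp
  from assms(5) have "concl \<rho> d B (hs @ [h])"
  proof (elim disjE conjE exE)
    assume "2 \<le> last hidden" "Ck 1 \<rho>" "\<not> Cinf \<rho>"
    then show ?thesis using case_i[OF assms(1) assms(4) hs] lh by simp
  next
    fix x y assume "2 \<le> last hidden" "bounded (range \<rho>)" "real_analytic \<rho>" "\<rho> x \<noteq> \<rho> y"
    then show ?thesis using case_ii[OF assms(1) assms(4) hs h] by blast
  next
    fix r q assume "approx_homogeneous \<rho> r q" "r \<noteq> q" "Ck (max r q) \<rho>"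
    then show ?thesis using case_iii[OF assms(1) assms(4) hs h] by blast
  qed
  then show ?thesis unfolding hid .
qed

end
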